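(* Assume $r\ge n^{\kappa}$ for some sufficiently small constant $\kappa>0$ and condition (C1). If $l_n=o(n)$, then $\sup_{\omega\in[-\pi,\pi]}\max_{(i,j)\in\mathcal I}|\mathrm{I}_{i,j}(\omega)-\zeta_{i,j}(\omega)|=O_{\rm p}(l_n^2n^{-1}\log r)$.
   Context: $\{\mathbf x_t\}$ is a $p$-dimensional stationary time series with mean $\boldsymbol\mu$, $\mathring{\mathbf x}_t=\mathbf x_t-\boldsymbol\mu=(\mathring x_{1,t},\dots,\mathring x_{p,t})^\top$, $\boldsymbol\Gamma(k)=\{\gamma_{i,j}(k)\}=\mathrm{Cov}(\mathbf x_{t+k},\mathbf x_t)$, $\iota=\sqrt{-1}$. Observations $\mathbf x_1,\dots,\mathbf x_n$. Flat-top kernel with fixed $c\in(0,1]$: $\mathcal W(u)=1$ for $|u|\le c$, $(|u|-1)/(c-1)$ for $c<|u|\le1$, $0$ otherwise; integer bandwidth $l_n$ with $n>2l_n$. $\tilde{\boldsymbol\Gamma}(k)=n^{-1}\sum_{t=1}^{n-k}\mathring{\mathbf x}_{t+k}\mathring{\mathbf x}_t^\top$ for $k\ge0$ and $n^{-1}\sum_{t=-k+1}^{n}\mathring{\mathbf x}_{t+k}\mathring{\mathbf x}_t^\top$ for $k<0$. $\mathrm I(\omega)=\{\mathrm I_{i,j}(\omega)\}=(2\pi)^{-1}\sum_{k=-l_n}^{l_n}\mathcal W(k/l_n)\{\tilde{\boldsymbol\Gamma}(k)-\frac{n-|k|}{n}\boldsymbol\Gamma(k)\}e^{-\iota k\omega}$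 and $\zeta_{i,j}(\omega)=(2\pi n)^{-1}\sum_{t=l_n+1}^{n-l_n}\sum_{k=-l_n}^{l_n}\mathcal W(k/l_n)\{\mathring x_{i,t+k}\mathring x_{j,t}-\gamma_{i,j}(k)\}e^{-\iota k\omega}$. $\mathcal I\subset[p]^2$, $r=|\mathcal I|$; $p,r,l_n$ may depend on $n$, limits as $n\to\infty$. Condition (C1): there are constants $C_1>0$, $C_2>1$ independent of $n,p$ with $\mathbb E\exp(C_1|x_{j,t}|^2)\le C_2$ for all $t,j$. *)

theory Defs
  imports "HOL-Probability.Probability" "HOL-Library.Landau_Symbols"
begin

definition flat_top :: "real \<Rightarrow> real \<Rightarrow> real" where
  "flat_top c u = (if \<bar>u\<bar> \<le> c then 1
                   else if \<bar>u\<bar> \<le> 1 then (\<bar>u\<bar> - 1) / (c - 1) else 0)"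

text \<open>Sample autocovariance (based on the centred data xc t i, times 1..n).\<close>
definition gamma_tilde :: "nat \<Rightarrow> (int \<Rightarrow> nat \<Rightarrow> real) \<Rightarrow> nat \<Rightarrow> nat \<Rightarrow> int \<Rightarrow> real" where
  "gamma_tilde n xc i j k =
     (if k \<ge> 0 then (\<Sum>t\<in>{1..int n - k}. xc (t + k) i * xc t j) / real n
      else (\<Sum>t\<in>{1 - k..int n}. xc (t + k) i * xc t j) / real n)"

text \<open>The (i,j) entry of I(omega); gam i j k is the true autocovariance gamma_{i,j}(k).\<close>
definition I_stat :: "real \<Rightarrow> nat \<Rightarrow> nat \<Rightarrow> (int \<Rightarrow> nat \<Rightarrow> real)
      \<Rightarrow> (nat \<Rightarrow> nat \<Rightarrow> int \<Rightarrow> real) \<Rightarrow> nat \<Rightarrow> nat \<Rightarrow> real \<Rightarrow> complex" where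
  "I_stat c n l xc gam i j w =
     (\<Sum>k\<in>{- int l..int l}.
        complex_of_real (flat_top c (real_of_int k / real l) *
          (gamma_tilde n xc i j k - (real n - real_of_int \<bar>k\<bar>) / real n * gam i j k))
        * exp (- \<i> * complex_of_real (real_of_int k * w))) / complex_of_real (2 * pi)"

definition zeta_stat :: "real \<Rightarrow> nat \<Rightarrow> nat \<Rightarrow> (int \<Rightarrow> nat \<Rightarrow> real)
      \<Rightarrow> (nat \<Rightarrow> nat \<Rightarrow> int \<Rightarrow> real) \<Rightarrow> nat \<Rightarrow> nat \<Rightarrow> real \<Rightarrow> complex" where
  "zeta_stat c n l xc gam i j w =
     (\<Sum>t\<in>{int l + 1..int n - int l}. \<Sum>k\<in>{- int l..int l}.
        complex_of_real (flat_top c (real_of_int k / real l) *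
          (xc (t + k) i * xc t j - gam i j k))
        * exp (- \<i> * complex_of_real (real_of_int k * w))) / complex_of_real (2 * pi * real n)"

end

theory Submission
  imports Defs
begin


lemma flat_top_bound: assumes "0 < c" "c \<le> 1" shows "\<bar>flat_top c u\<bar> \<le> 1"
proof -
  { assume h: "\<not> \<bar>u\<bar> \<le> c" "\<bar>u\<bar> \<le> 1"
    then have "c < 1" by linarith
    then have e: "(\<bar>u\<bar> - 1) / (c - 1) = (1 - \<bar>u\<bar>) / (1 - c)" by (simp add: divide_simps) argo
    have "(1 - \<bar>u\<bar>) / (1 - c) \<le> 1" using h \<open>c < 1\<close> by (simp add: divide_simps)
    moreover have "0 \<le> (1 - \<bar>u\<bar>) / (1 - c)" using h \<open>c < 1\<close> by simp
    ultimately have "\<bar>(\<bar>u\<bar> - 1) / (c - 1)\<bar> \<le> 1" unfolding e by (metis abs_of_nonneg)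
  }
  then show ?thesis unfolding flat_top_def by auto
qed

lemma sum_diff_bound:
  fixes f :: "int \<Rightarrow> real"
  assumes "finite R" "S \<subseteq> R" "\<And>t. t \<in> R \<Longrightarrow> \<bar>f t\<bar> \<le> U"
  shows "\<bar>sum f R - sum f S\<bar> \<le> real (card R - card S) * U"
proof -
  have "sum f R - sum f S = sum f (R - S)" using assms by (simp add: sum_diff)
  also have "\<bar>\<dots>\<bar> \<le> (\<Sum>t\<in>R - S. \<bar>f t\<bar>)" by (rule sum_abs)
  also have "\<dots> \<le> (\<Sum>t\<in>R - S. U)" using assms by (intro sum_mono) auto
  also have "\<dots> = real (card (R - S)) * U" by simp
  also have "card (R - S) = card R - card S" using assms by (meson card_Diff_subset finite_subset)
  finally show ?thesis .
qed

lemma det_bound: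
  fixes x :: "int \<Rightarrow> nat \<Rightarrow> real" and gam :: "nat \<Rightarrow> nat \<Rightarrow> int \<Rightarrow> real"
  assumes c: "0 < c" "c \<le> 1" and n: "0 < n" "2 * l < n"
    and xb: "\<And>t s. t \<in> {1..int n} \<Longrightarrow> s \<in> {1..int n} \<Longrightarrow> \<bar>x t i * x s j\<bar> \<le> U"
    and gb: "\<And>k. \<bar>gam i j k\<bar> \<le> G"
  shows "cmod (I_stat c n l x gam i j w - zeta_stat c n l x gam i j w) \<le> real l ^ 2 * (U + G) / real n"
proof -
  define W where "W k = flat_top c (real_of_int k / real l)" for k :: int
  define e where "e k = exp (- \<i> * complex_of_real (real_of_int k * w))" for k :: int
  define R where "R k = (if k \<ge> 0 then {1..int n - k} else {1 - k..int n})" for k :: int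
  define Sr where "Sr = {int l + 1..int n - int l}"
  define T where "T k = (\<Sum>t\<in>R k. x (t + k) i * x t j)" for k
  define S where "S k = (\<Sum>t\<in>Sr. x (t + k) i * x t j)" for k
  define K where "K = {- int l..int l}"
  define d where "d k = (T k - S k) - (2 * real l - real_of_int \<bar>k\<bar>) * gam i j k" for k
  have U0: "0 \<le> U" using xb[of 1 1] n by force
  have G0: "0 \<le> G" using gb[of 0] by linarith
  have gt: "gamma_tilde n x i j k = T k / real n" for k
    unfolding gamma_tilde_def T_def R_def by simp
  have I: "I_stat c n l x gam i j w
      = (\<Sum>k\<in>K. complex_of_real (W k * (T k - (real n - real_of_int \<bar>k\<bar>) * gam i j k)) * e k)
         / complex_of_real (2 * pi * real n)"
  proof -
    have "complex_of_real (W k * (T k / real n - (real n - real_of_int \<bar>k\<bar>) / real n * gam i j k)) * e k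
          / complex_of_real (2 * pi)
        = complex_of_real (W k * (T k - (real n - real_of_int \<bar>k\<bar>) * gam i j k)) * e k
          / complex_of_real (2 * pi * real n)" for k
    proof -
      have "W k * (T k / real n - (real n - real_of_int \<bar>k\<bar>) / real n * gam i j k)
          = W k * (T k - (real n - real_of_int \<bar>k\<bar>) * gam i j k) / real n"
        using n by (simp add: field_simps)
      then show ?thesis using n by (simp add: field_simps)
    qed
    then show ?thesis
      unfolding I_stat_def gt W_def[symmetric] e_def[symmetric] K_def[symmetric]
      by (simp add: sum_divide_distrib)
  qed
  have cardSr: "card Sr = n - 2 * l" unfolding Sr_def using n by simp
  have Z: "zeta_stat c n l x gam i j w
      = (\<Sum>k\<in>K. complex_of_real (W k * (S k - (real n - 2 * real l) * gam i j k)) * e k)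
         / complex_of_real (2 * pi * real n)"
  proof -
    have "(\<Sum>t\<in>Sr. complex_of_real (W k * (x (t + k) i * x t j - gam i j k)) * e k)
        = complex_of_real (W k * (S k - (real n - 2 * real l) * gam i j k)) * e k" for k
    proof -
      have "(\<Sum>t\<in>Sr. W k * (x (t + k) i * x t j - gam i j k))
          = W k * (S k - real (card Sr) * gam i j k)"
        unfolding S_def by (simp add: sum_distrib_left sum_subtractf algebra_simps)
      also have "real (card Sr) = real n - 2 * real l" using cardSr n by simp
      finally have eq: "(\<Sum>t\<in>Sr. W k * (x (t + k) i * x t j - gam i j k)) = W k * (S k - (real n - 2 * real l) * gam i j k)" .
      have gen: "(\<Sum>t\<in>Sr. complex_of_real (F t) * e k) = complex_of_real (\<Sum>t\<in>Sr. F t) * e k" for F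
        by (simp add: sum_distrib_right)
      show ?thesis unfolding gen eq ..
    qed
    then show ?thesis
      unfolding zeta_stat_def W_def[symmetric] e_def[symmetric] K_def[symmetric] Sr_def[symmetric]
      by (subst sum.swap) simp
  qed
  have D: "I_stat c n l x gam i j w - zeta_stat c n l x gam i j w
      = (\<Sum>k\<in>K. complex_of_real (W k * d k) * e k) / complex_of_real (2 * pi * real n)"
    unfolding I Z diff_divide_distrib[symmetric] sum_subtractf[symmetric]
  proof (intro arg_cong2[where f="(/)"] sum.cong refl)
    fix k
    have h: "complex_of_real a * z - complex_of_real b * z = complex_of_real (a - b) * z" for a b z
      by (simp add: left_diff_distrib)
    have "W k * (T k - (real n - real_of_int \<bar>k\<bar>) * gam i j k) - W k * (S k - (real n - 2 * real l) * gam i j k)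
        = W k * d k" by (simp add: d_def algebra_simps)
    then show "complex_of_real (W k * (T k - (real n - real_of_int \<bar>k\<bar>) * gam i j k)) * e k -
         complex_of_real (W k * (S k - (real n - 2 * real l) * gam i j k)) * e k =
         complex_of_real (W k * d k) * e k" by (simp only: h)
  qed
  have dk: "\<bar>d k\<bar> \<le> 2 * real l * (U + G)" if k: "k \<in> K" for k
  proof -
    have sub: "Sr \<subseteq> R k" using k unfolding Sr_def R_def K_def by auto
    have cR: "card (R k) = n - nat \<bar>k\<bar>" using k n unfolding R_def K_def by auto
    have "\<bar>T k - S k\<bar> \<le> real (card (R k) - card Sr) * U"
      unfolding T_def S_def
      by (rule sum_diff_bound[OF _ sub]) (use xb in \<open>auto simp: R_def split: if_splits\<close>)
    also have "real (card (R k) - card Sr) = 2 * real l - real_of_int \<bar>k\<bar>"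
      using cR cardSr k n unfolding K_def by auto
    finally have 1: "\<bar>T k - S k\<bar> \<le> (2 * real l - real_of_int \<bar>k\<bar>) * U" .
    have k0: "0 \<le> 2 * real l - real_of_int \<bar>k\<bar>" "2 * real l - real_of_int \<bar>k\<bar> \<le> 2 * real l"
      using k unfolding K_def by auto
    have 2: "\<bar>(2 * real l - real_of_int \<bar>k\<bar>) * gam i j k\<bar> \<le> (2 * real l - real_of_int \<bar>k\<bar>) * G"
      using k0 gb[of k] by (simp add: abs_mult mult_left_mono)
    have "\<bar>d k\<bar> \<le> (2 * real l - real_of_int \<bar>k\<bar>) * (U + G)"
      using 1 2 unfolding d_def by (simp add: algebra_simps)
    also have "\<dots> \<le> 2 * real l * (U + G)" using k0 U0 G0 by (intro mult_right_mono) auto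
    finally show ?thesis .
  qed
  have "cmod (\<Sum>k\<in>K. complex_of_real (W k * d k) * e k) \<le> (\<Sum>k\<in>K. 2 * real l * (U + G))"
  proof -
    have "cmod (\<Sum>k\<in>K. complex_of_real (W k * d k) * e k) \<le> (\<Sum>k\<in>K. cmod (complex_of_real (W k * d k) * e k))"
      by (rule norm_sum)
    also have "\<dots> \<le> (\<Sum>k\<in>K. 2 * real l * (U + G))"
    proof (rule sum_mono)
      fix k assume k: "k \<in> K"
      have "cmod (e k) = 1" unfolding e_def by (simp add: norm_exp_eq_Re)
      then have "cmod (complex_of_real (W k * d k) * e k) = \<bar>W k\<bar> * \<bar>d k\<bar>"
        by (simp add: norm_mult abs_mult)
      also have "\<dots> \<le> 1 * (2 * real l * (U + G))"
        using flat_top_bound[OF c] dk[OF k] unfolding W_def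
        by (intro mult_mono) auto
      finally show "cmod (complex_of_real (W k * d k) * e k) \<le> 2 * real l * (U + G)" by simp
    qed
    finally show ?thesis .
  qed
  also have "\<dots> = (2 * real l + 1) * (2 * real l) * (U + G)" unfolding K_def by simp
  finally have N: "cmod (\<Sum>k\<in>K. complex_of_real (W k * d k) * e k) \<le> (2 * real l + 1) * (2 * real l) * (U + G)" .
  have "cmod (I_stat c n l x gam i j w - zeta_stat c n l x gam i j w)
      = cmod (\<Sum>k\<in>K. complex_of_real (W k * d k) * e k) / (2 * pi * real n)"
    unfolding D norm_divide norm_of_real using n pi_gt_zero by (simp only: abs_of_pos mult_pos_pos of_nat_0_less_iff zero_less_numeral)
  also have "\<dots> \<le> (2 * real l + 1) * (2 * real l) * (U + G) / (2 * pi * real n)"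
    using N n by (intro divide_right_mono) auto
  also have "\<dots> \<le> real l ^ 2 * (U + G) / real n"
  proof -
    have "(2 * real l + 1) * (2 * real l) \<le> 2 * pi * real l ^ 2"
    proof (cases "l = 0")
      case False
      then have "1 \<le> real l" by simp
      then have "(2 * real l + 1) * (2 * real l) \<le> 6 * real l ^ 2" by (simp add: power2_eq_square algebra_simps)
      also have "\<dots> \<le> 2 * pi * real l ^ 2" using pi_gt3 by (intro mult_right_mono) auto
      finally show ?thesis .
    qed simp
    then have "(2 * real l + 1) * (2 * real l) * (U + G) \<le> 2 * pi * real l ^ 2 * (U + G)"
      using U0 G0 by (intro mult_right_mono) auto
    then show ?thesis using n pi_gt_zero by (simp add: divide_simps) (simp add: algebra_simps)
  qed
  finally show ?thesis .
qed



lemma tail_bound: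
  fixes f :: "'a \<Rightarrow> real"
  assumes P: "prob_space M" and fm: "f \<in> borel_measurable M"
    and C: "0 < C1" "(\<integral>\<^sup>+ s. ennreal (exp (C1 * (f s)\<^sup>2)) \<partial>M) \<le> ennreal C2"
    and v: "0 \<le> v" and C20: "0 \<le> C2"
  shows "measure M {s\<in>space M. v < \<bar>f s\<bar>} \<le> C2 / exp (C1 * v\<^sup>2)"
proof -
  interpret P: prob_space M by (rule P)
  define Bd where "Bd = {s\<in>space M. v < \<bar>f s\<bar>}"
  define E where "E = exp (C1 * v\<^sup>2)"
  have E0: "0 < E" unfolding E_def by simp
  have Bs: "Bd \<in> sets M" unfolding Bd_def
    using borel_measurable_iff_greater[THEN iffD1, OF borel_measurable_abs[OF fm]] by blast
  have "emeasure M Bd = (\<integral>\<^sup>+ s. indicator Bd s \<partial>M)" using Bs by simp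
  also have "\<dots> \<le> (\<integral>\<^sup>+ s. ennreal (exp (C1 * (f s)\<^sup>2)) * ennreal (1 / E) \<partial>M)"
  proof (intro nn_integral_mono)
    fix s assume s: "s \<in> space M"
    show "indicator Bd s \<le> ennreal (exp (C1 * (f s)\<^sup>2)) * ennreal (1 / E)"
    proof (cases "s \<in> Bd")
      case True
      then have "v < \<bar>f s\<bar>" unfolding Bd_def by simp
      then have "v\<^sup>2 \<le> (f s)\<^sup>2" using v by (metis abs_ge_zero less_imp_le power2_abs power_mono)
      then have "E \<le> exp (C1 * (f s)\<^sup>2)" unfolding E_def using C by simp
      then have "1 \<le> exp (C1 * (f s)\<^sup>2) * (1 / E)" using E0 by (simp add: divide_simps)
      then have "ennreal 1 \<le> ennreal (exp (C1 * (f s)\<^sup>2) * (1 / E))" by (rule ennreal_leI)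
      also have "\<dots> = ennreal (exp (C1 * (f s)\<^sup>2)) * ennreal (1 / E)" using E0 by (intro ennreal_mult) auto
      finally show ?thesis using True by simp
    qed simp
  qed
  also have "\<dots> = (\<integral>\<^sup>+ s. ennreal (exp (C1 * (f s)\<^sup>2)) \<partial>M) * ennreal (1 / E)"
    by (rule nn_integral_multc) (intro measurable_compose[OF _ measurable_ennreal] measurable_compose[OF _ borel_measurable_exp] borel_measurable_times borel_measurable_const borel_measurable_power fm)
  also have "\<dots> \<le> ennreal C2 * ennreal (1 / E)" using C by (intro mult_right_mono) auto
  also have "\<dots> = ennreal (C2 / E)" using E0 C20 by (simp add: ennreal_mult[symmetric])
  finally have "ennreal (measure M Bd) \<le> ennreal (C2 / E)" by (simp add: P.emeasure_eq_measure)
  then show ?thesis unfolding Bd_def[symmetric] E_def[symmetric] using E0 C20 by (simp add: ennreal_le_iff)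
qed

lemma int_bound:
  fixes g h1 h2 :: "'a \<Rightarrow> real"
  assumes P: "prob_space M" and hm: "h1 \<in> borel_measurable M" "h2 \<in> borel_measurable M"
    and C: "(\<integral>\<^sup>+ s. ennreal (exp (C1 * (h1 s)\<^sup>2)) \<partial>M) \<le> ennreal C2"
           "(\<integral>\<^sup>+ s. ennreal (exp (C1 * (h2 s)\<^sup>2)) \<partial>M) \<le> ennreal C2"
    and ab: "0 \<le> a" "0 \<le> b" "0 \<le> C2"
    and gb: "\<And>s. s \<in> space M \<Longrightarrow> \<bar>g s\<bar> \<le> a + b * (exp (C1 * (h1 s)\<^sup>2) + exp (C1 * (h2 s)\<^sup>2))"
  shows "\<bar>integral\<^sup>L M g\<bar> \<le> a + 2 * b * C2"
proof -
  interpret P: prob_space M by (rule P)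
  have "\<bar>integral\<^sup>L M g\<bar> \<le> integral\<^sup>L M (\<lambda>s. \<bar>g s\<bar>)"
    using integral_norm_bound[of M g] by simp
  also have "\<dots> \<le> a + 2 * b * C2"
  proof (rule integral_real_bounded)
    show "0 \<le> a + 2 * b * C2" using ab by simp
    have "(\<integral>\<^sup>+ s. ennreal \<bar>g s\<bar> \<partial>M)
        \<le> (\<integral>\<^sup>+ s. ennreal a + ennreal b * ennreal (exp (C1 * (h1 s)\<^sup>2)) + ennreal b * ennreal (exp (C1 * (h2 s)\<^sup>2)) \<partial>M)"
    proof (intro nn_integral_mono)
      fix s assume s: "s \<in> space M"
      have "ennreal \<bar>g s\<bar> \<le> ennreal (a + b * exp (C1 * (h1 s)\<^sup>2) + b * exp (C1 * (h2 s)\<^sup>2))"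
        using gb[OF s] by (intro ennreal_leI) (simp add: algebra_simps)
      also have "\<dots> = ennreal a + ennreal b * ennreal (exp (C1 * (h1 s)\<^sup>2)) + ennreal b * ennreal (exp (C1 * (h2 s)\<^sup>2))"
        using ab by (simp add: ennreal_plus ennreal_mult)
      finally show "ennreal \<bar>g s\<bar> \<le> \<dots>" .
    qed
    also have "\<dots> = ennreal a + ennreal b * (\<integral>\<^sup>+ s. ennreal (exp (C1 * (h1 s)\<^sup>2)) \<partial>M) + ennreal b * (\<integral>\<^sup>+ s. ennreal (exp (C1 * (h2 s)\<^sup>2)) \<partial>M)"
      using hm by (simp add: nn_integral_add nn_integral_cmult P.emeasure_space_1)
    also have "\<dots> \<le> ennreal a + ennreal b * ennreal C2 + ennreal b * ennreal C2"
      using C by (intro add_mono mult_left_mono) auto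
    also have "\<dots> = ennreal (a + 2 * b * C2)" using ab by (simp only: ennreal_plus[symmetric] ennreal_mult[symmetric] mult_nonneg_nonneg add_nonneg_nonneg) (simp add: algebra_simps)
    finally show "(\<integral>\<^sup>+ s. ennreal \<bar>g s\<bar> \<partial>M) \<le> ennreal (a + 2 * b * C2)" .
  qed
  finally show ?thesis .
qed



lemma prod_bound: "\<bar>(a - u) * (b - w)\<bar> \<le> a\<^sup>2 + b\<^sup>2 + u\<^sup>2 + w\<^sup>2" for a b u w :: real
proof -
  have "2 * \<bar>(a - u) * (b - w)\<bar> \<le> (a - u)\<^sup>2 + (b - w)\<^sup>2"
    using sum_squares_bound[of "\<bar>a - u\<bar>" "\<bar>b - w\<bar>"] by (simp add: abs_mult)
  moreover have "(a - u)\<^sup>2 \<le> 2 * a\<^sup>2 + 2 * u\<^sup>2" using sum_squares_bound[of a "-u"] by (simp add: power2_diff)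
  moreover have "(b - w)\<^sup>2 \<le> 2 * b\<^sup>2 + 2 * w\<^sup>2" using sum_squares_bound[of b "-w"] by (simp add: power2_diff)
  ultimately show ?thesis by linarith
qed

lemma sq_exp: fixes x :: real assumes "0 < C1" shows "x\<^sup>2 \<le> exp (C1 * x\<^sup>2) / C1"
proof -
  have "C1 * x\<^sup>2 \<le> exp (C1 * x\<^sup>2)" using exp_ge_add_one_self[of "C1 * x\<^sup>2"] by linarith
  then show ?thesis using assms by (simp add: divide_simps mult.commute)
qed

lemma scale_le: fixes y a R :: real assumes "0 \<le> y" "0 < a" "a \<le> R" shows "y \<le> y / a * R"
proof -
  have "y = y / a * a" using assms by simp
  also have "\<dots> \<le> y / a * R" using assms by (intro mult_left_mono) auto
  finally show ?thesis .
qed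

lemma abs_sq: "\<bar>x\<bar> \<le> 1 + x\<^sup>2" for x :: real
proof -
  have "2 * \<bar>x\<bar> * 1 \<le> \<bar>x\<bar>\<^sup>2 + 1\<^sup>2" by (rule sum_squares_bound)
  moreover have "0 \<le> x\<^sup>2" by simp
  ultimately show ?thesis by simp
qed


theorem lemmaL2:
  fixes M :: "'a measure"
    and X :: "nat \<Rightarrow> int \<Rightarrow> nat \<Rightarrow> 'a \<Rightarrow> real"
    and p l :: "nat \<Rightarrow> nat"
    and \<I> :: "nat \<Rightarrow> (nat \<times> nat) set"
    and \<mu> :: "nat \<Rightarrow> nat \<Rightarrow> real"
    and \<gamma> :: "nat \<Rightarrow> nat \<Rightarrow> nat \<Rightarrow> int \<Rightarrow> real"
    and c \<kappa> C1 C2 :: real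
  assumes P: "prob_space M"
    and meas: "\<And>n t j. j < p n \<Longrightarrow> X n t j \<in> borel_measurable M"
    and mean: "\<And>n t j. j < p n \<Longrightarrow> prob_space.expectation M (X n t j) = \<mu> n j"
    and cov: "\<And>n t k i j. i < p n \<Longrightarrow> j < p n \<Longrightarrow>
        prob_space.expectation M (\<lambda>s. (X n (t + k) i s - \<mu> n i) * (X n t j s - \<mu> n j)) = \<gamma> n i j k"
    and c: "0 < c" "c \<le> 1"
    and bw: "\<And>n. 0 < n \<Longrightarrow> 2 * l n < n"
    and lo: "(\<lambda>n. real (l n)) \<in> o(\<lambda>n. real n)"
    and Isub: "\<And>n. \<I> n \<subseteq> {..<p n} \<times> {..<p n}"
    and kappa: "0 < \<kappa>"
    and rbig: "\<And>n. real (card (\<I> n)) \<ge> real n powr \<kappa>"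
    and C1: "0 < C1" "1 < C2"
        "\<And>n t j. j < p n \<Longrightarrow> (\<integral>\<^sup>+ s. ennreal (exp (C1 * (X n t j s)\<^sup>2)) \<partial>M) \<le> ennreal C2"
  shows "\<forall>\<epsilon>>0. \<exists>B N. \<forall>n\<ge>N. \<exists>A\<in>sets M. prob_space.prob M A \<ge> 1 - \<epsilon> \<and>
           (\<forall>s\<in>A. \<forall>w\<in>{-pi..pi}. \<forall>(i,j)\<in>\<I> n.
              cmod (I_stat c n (l n) (\<lambda>t i. X n t i s - \<mu> n i) (\<gamma> n) i j w
                    - zeta_stat c n (l n) (\<lambda>t i. X n t i s - \<mu> n i) (\<gamma> n) i j w)
              \<le> B * (real (l n) ^ 2 * ln (real (card (\<I> n))) / real n))"
proof (intro allI impI)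
  fix \<epsilon> :: real assume \<epsilon>: "0 < \<epsilon>"
  interpret P: prob_space M by (rule P)
  define m where "m = 1 + C2 / C1"
  define G where "G = 2 * m\<^sup>2 + 2 * (1 / C1) * C2"
  define L where "L = \<bar>ln (2 * C2 / \<epsilon>)\<bar>"
  define B where "B = 2 * (L / ln 2 + 1 / \<kappa> + 1) / C1 + (2 * m\<^sup>2 + G) / ln 2"
  define N where "N = nat \<lceil>2 powr (1 / \<kappa>)\<rceil> + 1"
  have C20: "0 \<le> C2" using C1 by simp
  have m0: "0 \<le> m" unfolding m_def using C1 by simp
  have mu: "\<bar>\<mu> n j\<bar> \<le> m" if j: "j < p n" for n j
  proof -
    have "\<bar>integral\<^sup>L M (X n 0 j)\<bar> \<le> 1 + 2 * (1 / (2 * C1)) * C2"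
    proof (rule int_bound[OF P meas[OF j] meas[OF j] C1(3)[OF j] C1(3)[OF j]])
      fix s
      have a: "\<bar>X n 0 j s\<bar> \<le> 1 + (X n 0 j s)\<^sup>2" by (rule abs_sq)
      have b: "(X n 0 j s)\<^sup>2 \<le> exp (C1 * (X n 0 j s)\<^sup>2) / C1" by (rule sq_exp[OF C1(1)])
      have e: "1 / (2 * C1) * (exp (C1 * (X n 0 j s)\<^sup>2) + exp (C1 * (X n 0 j s)\<^sup>2)) = exp (C1 * (X n 0 j s)\<^sup>2) / C1"
        by simp
      show "\<bar>X n 0 j s\<bar> \<le> 1 + 1 / (2 * C1) * (exp (C1 * (X n 0 j s)\<^sup>2) + exp (C1 * (X n 0 j s)\<^sup>2))"
        unfolding e using a b by linarith
    next
      show "0 \<le> 1 / (2 * C1)" using C1(1) by simp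
    qed (use C1(2) in simp_all)
    then show ?thesis using mean[OF j, of 0] C1(1) unfolding m_def by simp
  qed
  have gam: "\<bar>\<gamma> n i j k\<bar> \<le> G" if i: "i < p n" and j: "j < p n" for n i j k
  proof -
    have mi: "(\<mu> n i)\<^sup>2 \<le> m\<^sup>2" using mu[OF i] m0 abs_le_square_iff[of "\<mu> n i" m] by simp
    have mj: "(\<mu> n j)\<^sup>2 \<le> m\<^sup>2" using mu[OF j] m0 abs_le_square_iff[of "\<mu> n j" m] by simp
    have "\<bar>integral\<^sup>L M (\<lambda>s. (X n (0 + k) i s - \<mu> n i) * (X n 0 j s - \<mu> n j))\<bar> \<le> 2 * m\<^sup>2 + 2 * (1 / C1) * C2"
    proof (rule int_bound[OF P meas[OF i] meas[OF j] C1(3)[OF i] C1(3)[OF j]])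
      fix s
      have a: "\<bar>(X n (0 + k) i s - \<mu> n i) * (X n 0 j s - \<mu> n j)\<bar>
          \<le> (X n k i s)\<^sup>2 + (X n 0 j s)\<^sup>2 + (\<mu> n i)\<^sup>2 + (\<mu> n j)\<^sup>2" using prod_bound by simp
      have b1: "(X n k i s)\<^sup>2 \<le> exp (C1 * (X n k i s)\<^sup>2) / C1" by (rule sq_exp[OF C1(1)])
      have b2: "(X n 0 j s)\<^sup>2 \<le> exp (C1 * (X n 0 j s)\<^sup>2) / C1" by (rule sq_exp[OF C1(1)])
      have e: "1 / C1 * (exp (C1 * (X n k i s)\<^sup>2) + exp (C1 * (X n 0 j s)\<^sup>2))
          = exp (C1 * (X n k i s)\<^sup>2) / C1 + exp (C1 * (X n 0 j s)\<^sup>2) / C1"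
        by (simp add: add_divide_distrib)
      show "\<bar>(X n (0 + k) i s - \<mu> n i) * (X n 0 j s - \<mu> n j)\<bar>
          \<le> 2 * m\<^sup>2 + 1 / C1 * (exp (C1 * (X n k i s)\<^sup>2) + exp (C1 * (X n 0 j s)\<^sup>2))"
        unfolding e using a b1 b2 mi mj by linarith
    next
      show "0 \<le> 2 * m\<^sup>2" by simp
      show "0 \<le> 1 / C1" using C1(1) by simp
      show "0 \<le> C2" using C1(2) by simp
    qed
    then show ?thesis using cov[OF i j, of 0 k] unfolding G_def by simp
  qed
  have G0: "0 \<le> G" unfolding G_def using C1 by simp
  have L0: "0 \<le> L" unfolding L_def by simp
  have expL: "2 * C2 / \<epsilon> \<le> exp L"
  proof -
    have "2 * C2 / \<epsilon> = exp (ln (2 * C2 / \<epsilon>))" using C1 \<epsilon> by simp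
    also have "\<dots> \<le> exp L" unfolding L_def by simp
    finally show ?thesis .
  qed
  show "\<exists>B N. \<forall>n\<ge>N. \<exists>A\<in>sets M. prob_space.prob M A \<ge> 1 - \<epsilon> \<and>
           (\<forall>s\<in>A. \<forall>w\<in>{-pi..pi}. \<forall>(i,j)\<in>\<I> n.
              cmod (I_stat c n (l n) (\<lambda>t i. X n t i s - \<mu> n i) (\<gamma> n) i j w
                    - zeta_stat c n (l n) (\<lambda>t i. X n t i s - \<mu> n i) (\<gamma> n) i j w)
              \<le> B * (real (l n) ^ 2 * ln (real (card (\<I> n))) / real n))"
  proof (intro exI allI impI)
    fix n assume nN: "N \<le> n"
    define r where "r = card (\<I> n)"
    have n1: "0 < n" using nN unfolding N_def by simp
    have "2 powr (1 / \<kappa>) < real n"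
    proof -
      have "2 powr (1 / \<kappa>) \<le> real (nat \<lceil>2 powr (1 / \<kappa>)\<rceil>)" by (rule real_nat_ceiling_ge)
      then show ?thesis using nN unfolding N_def by linarith
    qed
    then have "(2 powr (1 / \<kappa>)) powr \<kappa> \<le> real n powr \<kappa>" using kappa by (intro powr_mono2) auto
    then have "2 \<le> real n powr \<kappa>" using kappa by (simp add: powr_powr)
    then have r2: "2 \<le> real r" using rbig[of n] unfolding r_def by linarith
    have lnr: "ln 2 \<le> ln (real r)" using r2 by simp
    have ln2: "0 < ln (2::real)" by simp
    have lnn: "\<kappa> * ln (real n) \<le> ln (real r)"
    proof -
      have "\<kappa> * ln (real n) = ln (real n powr \<kappa>)" using n1 by (simp add: ln_powr)
      also have "\<dots> \<le> ln (real r)" using rbig[of n] n1 r2 unfolding r_def by (subst ln_le_cancel_iff) auto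
      finally show ?thesis .
    qed
    have lnn0: "0 \<le> ln (real n)" using n1 by simp
    have bwn: "2 * l n < n" using bw[OF n1] .
    have finI: "finite (\<I> n)" using r2 unfolding r_def by (intro card_ge_0_finite) simp
    define v2 where "v2 = (L + ln (real n) + ln (real r)) / C1"
    have v20: "0 \<le> v2"
    proof -
      have "0 \<le> L + ln (real n) + ln (real r)" using L0 lnn0 lnr ln2 by linarith
      then show ?thesis unfolding v2_def using C1(1) by simp
    qed
    define v where "v = sqrt v2"
    have v0: "0 \<le> v" unfolding v_def using v20 by simp
    have vv: "v\<^sup>2 = v2" unfolding v_def using v20 by simp
    define J where "J = fst ` \<I> n \<union> snd ` \<I> n"
    have finJ: "finite J" unfolding J_def using finI by simp
    have cardJ: "card J \<le> 2 * r"
    proof -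
      have "card J \<le> card (fst ` \<I> n) + card (snd ` \<I> n)" unfolding J_def by (rule card_Un_le)
      also have "\<dots> \<le> r + r" unfolding r_def by (intro add_mono card_image_le finI)
      finally show ?thesis by simp
    qed
    have Jp: "j \<in> J \<Longrightarrow> j < p n" for j using Isub[of n] unfolding J_def by auto
    define Bd where "Bd q = {s\<in>space M. v < \<bar>X n (fst q) (snd q) s\<bar>}" for q :: "int \<times> nat"
    define Q where "Q = {1..int n} \<times> J"
    have finQ: "finite Q" unfolding Q_def using finJ by simp
    have Bds: "Bd q \<in> sets M" if "q \<in> Q" for q
    proof -
      have "snd q < p n" using that Jp unfolding Q_def by auto
      then have "(\<lambda>s. \<bar>X n (fst q) (snd q) s\<bar>) \<in> borel_measurable M"
        using meas by (intro borel_measurable_abs) auto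
      then show ?thesis unfolding Bd_def by (rule borel_measurable_iff_greater[THEN iffD1, rule_format])
    qed
    define A where "A = space M - (\<Union>q\<in>Q. Bd q)"
    have Us: "(\<Union>q\<in>Q. Bd q) \<in> sets M" using finQ Bds by (intro sets.finite_UN) auto
    have As: "A \<in> sets M" unfolding A_def using Us by auto
    define E where "E = exp (C1 * v\<^sup>2)"
    have E: "E = exp L * real n * real r"
    proof -
      have "C1 * v\<^sup>2 = L + ln (real n) + ln (real r)" unfolding vv v2_def using C1 by simp
      then show ?thesis unfolding E_def using n1 r2 by (simp add: exp_add)
    qed
    have "P.prob (\<Union>q\<in>Q. Bd q) \<le> (\<Sum>q\<in>Q. P.prob (Bd q))"
      using finQ Bds by (intro measure_UNION_le) auto
    also have "\<dots> \<le> (\<Sum>q\<in>Q. C2 / E)"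
    proof (intro sum_mono)
      fix q assume q: "q \<in> Q"
      have qp: "snd q < p n" using q Jp unfolding Q_def by auto
      show "P.prob (Bd q) \<le> C2 / E" unfolding Bd_def E_def
        by (rule tail_bound[OF P meas[OF qp] C1(1) C1(3)[OF qp] v0 C20])
    qed
    also have "\<dots> = real (card Q) * C2 / E" by simp
    also have "\<dots> \<le> real n * (2 * real r) * C2 / E"
    proof -
      have "card Q = n * card J" unfolding Q_def by (simp add: card_cartesian_product)
      moreover have "n * card J \<le> n * (2 * r)" using cardJ by (rule mult_le_mono2)
      ultimately have "card Q \<le> n * (2 * r)" by simp
      then have "real (card Q) \<le> real (n * (2 * r))" by (rule of_nat_mono)
      then have "real (card Q) \<le> real n * (2 * real r)" by simp
      then show ?thesis using C20 E n1 r2 by (intro divide_right_mono mult_right_mono) auto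
    qed
    also have "\<dots> = 2 * C2 / exp L" unfolding E using n1 r2 by (simp add: field_simps)
    also have "\<dots> \<le> \<epsilon>" using expL \<epsilon> C1 by (simp add: divide_simps mult.commute)
    finally have pU: "P.prob (\<Union>q\<in>Q. Bd q) \<le> \<epsilon>" .
    have pA: "1 - \<epsilon> \<le> P.prob A" unfolding A_def using P.prob_compl[OF Us] pU by simp
    define U where "U = 2 * v2 + 2 * m\<^sup>2"
    have UG: "U + G \<le> B * ln (real r)"
    proof -
      have a: "L \<le> L / ln 2 * ln (real r)" using L0 ln2 lnr by (rule scale_le)
      have b: "ln (real n) \<le> 1 / \<kappa> * ln (real r)" using lnn kappa by (simp add: field_simps mult.commute)
      have "v2 \<le> (L / ln 2 + 1 / \<kappa> + 1) * ln (real r) / C1" unfolding v2_def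
        using a b C1 by (intro divide_right_mono) (auto simp: algebra_simps)
      moreover have "2 * m\<^sup>2 + G \<le> (2 * m\<^sup>2 + G) / ln 2 * ln (real r)"
        using _ ln2 lnr by (rule scale_le) (use G0 in simp)
      moreover have "B * ln (real r) = 2 * ((L / ln 2 + 1 / \<kappa> + 1) * ln (real r) / C1) + (2 * m\<^sup>2 + G) / ln 2 * ln (real r)"
        unfolding B_def by (simp add: algebra_simps)
      ultimately show ?thesis unfolding U_def by linarith
    qed
    have H: "cmod (I_stat c n (l n) (\<lambda>t i. X n t i s - \<mu> n i) (\<gamma> n) i j w
                    - zeta_stat c n (l n) (\<lambda>t i. X n t i s - \<mu> n i) (\<gamma> n) i j w)
              \<le> B * (real (l n) ^ 2 * ln (real (card (\<I> n))) / real n)"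
      if s: "s \<in> A" and ij: "(i, j) \<in> \<I> n" for s w i j
    proof -
      have sM: "s \<in> space M" using s unfolding A_def by auto
      have iJ: "i \<in> J" and jJ: "j \<in> J" using ij unfolding J_def by force+
      have ip: "i < p n" and jp: "j < p n" using Jp iJ jJ by auto
      have xv: "\<bar>X n t a s - \<mu> n a\<bar> \<le> v + m" if "t \<in> {1..int n}" "a \<in> J" for t a
      proof -
        have "(t, a) \<in> Q" using that unfolding Q_def by auto
        then have "s \<notin> Bd (t, a)" using s unfolding A_def by auto
        then have "\<bar>X n t a s\<bar> \<le> v" using sM unfolding Bd_def by auto
        then show ?thesis using mu[OF Jp[OF that(2)]] by linarith
      qed
      have "cmod (I_stat c n (l n) (\<lambda>t i. X n t i s - \<mu> n i) (\<gamma> n) i j w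
                    - zeta_stat c n (l n) (\<lambda>t i. X n t i s - \<mu> n i) (\<gamma> n) i j w)
           \<le> real (l n) ^ 2 * (U + G) / real n"
      proof (rule det_bound[OF c n1 bwn])
        fix t t' assume t: "t \<in> {1..int n}" and t': "t' \<in> {1..int n}"
        have "\<bar>(X n t i s - \<mu> n i) * (X n t' j s - \<mu> n j)\<bar> \<le> (v + m) * (v + m)"
          unfolding abs_mult using xv[OF t iJ] xv[OF t' jJ] by (intro mult_mono) auto
        also have "\<dots> \<le> U" unfolding U_def using sum_squares_bound[of v m] vv
          by (simp add: power2_eq_square algebra_simps)
        finally show "\<bar>(X n t i s - \<mu> n i) * (X n t' j s - \<mu> n j)\<bar> \<le> U" .
      next
        fix k show "\<bar>\<gamma> n i j k\<bar> \<le> G" by (rule gam[OF ip jp])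
      qed
      also have "\<dots> \<le> real (l n) ^ 2 * (B * ln (real r)) / real n"
        using UG n1 by (intro divide_right_mono mult_left_mono) auto
      finally show ?thesis
        unfolding r_def by (simp add: algebra_simps)
    qed
    show "\<exists>A\<in>sets M. prob_space.prob M A \<ge> 1 - \<epsilon> \<and>
           (\<forall>s\<in>A. \<forall>w\<in>{-pi..pi}. \<forall>(i,j)\<in>\<I> n.
              cmod (I_stat c n (l n) (\<lambda>t i. X n t i s - \<mu> n i) (\<gamma> n) i j w
                    - zeta_stat c n (l n) (\<lambda>t i. X n t i s - \<mu> n i) (\<gamma> n) i j w)
              \<le> B * (real (l n) ^ 2 * ln (real (card (\<I> n))) / real n))"
      using As pA H by fast
  qed
qed

end
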